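(* Consider the $T$-round online first-price auction problem described in the context, and suppose the learner knows an upper bound $V_T$ on $\sum_{t=2}^T|m_t-m_{t-1}|$, with $V_T=o(T)$, and that $V_T^v\coloneqq\sum_{t=2}^T|v_t-v_{t-1}|=o(T)$. Then the policy that partitions $\{1,\dots,T\}$ into consecutive batches of length $\Delta_T$ (the last possibly shorter), with $\Delta_T$ of order $\left(\frac{T}{V_T+V_T^v}\right)^{2/3}$, and at the start of each batch restarts the Hedge (exponential weights) algorithm over a finite grid of constant bids in $[0,1]$ (with suitable grid and learning rate, using full-information rewards $r(\tau;v_t,m_t)$ of every grid bid $\tau$), achieves expected dynamic regret $\tilde{O}\left(T^{2/3}(V_T+V_T^v)^{1/3}\right)$.
   Context: Online first-price auction over $T$ rounds: at each round $t$ the learner observes a private value $v_t\in[0,1]$, submits a bid $b_t\in[0,1]$ (possibly randomized, depending only on past $(v_s,m_s)_{s<t}$ and $v_t$), then observes $m_t\in[0,1]$, the highest bid of the other bidders, and receives reward $r(b_t;v_t,m_t)$ with $r(b;v,m)\coloneqq(v-b)\mathbbm{1}(b\ge m)$. The expected dynamic regret is $\mathbb{E}[\mathrm{DR}_T(\pi)]\coloneqq\sum_{t=1}^T\max\{v_t-m_t,0\}-\sum_{t=1}^T\mathbb{E}[r(b_t;v_t,m_t)]$. $\tilde{O}(\cdot)$ hides polylogarithmic factors in $T$. *)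

theory Defs
  imports Complex_Main "HOL-Library.Landau_Symbols"
begin

definition reward :: "real \<Rightarrow> real \<Rightarrow> real \<Rightarrow> real" where
  "reward b v m = (if m \<le> b then v - b else 0)"

definition variation :: "(nat \<Rightarrow> real) \<Rightarrow> nat \<Rightarrow> real" where
  "variation f T = (\<Sum>t=2..T. \<bar>f t - f (t - 1)\<bar>)"

definition grid :: "nat \<Rightarrow> nat \<Rightarrow> real" where
  "grid K k = real k / real K"

definition batch_start :: "nat \<Rightarrow> nat \<Rightarrow> nat" where
  "batch_start D t = ((t - 1) div D) * D + 1"

definition cum_reward ::
  "nat \<Rightarrow> nat \<Rightarrow> (nat \<Rightarrow> real) \<Rightarrow> (nat \<Rightarrow> real) \<Rightarrow> nat \<Rightarrow> nat \<Rightarrow> real" where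
  "cum_reward K D v m t k = (\<Sum>s\<in>{batch_start D t..<t}. reward (grid K k) (v s) (m s))"

definition hedge_prob ::
  "nat \<Rightarrow> real \<Rightarrow> nat \<Rightarrow> (nat \<Rightarrow> real) \<Rightarrow> (nat \<Rightarrow> real) \<Rightarrow> nat \<Rightarrow> nat \<Rightarrow> real" where
  "hedge_prob K eta D v m t k =
     exp (eta * cum_reward K D v m t k) / (\<Sum>j=0..K. exp (eta * cum_reward K D v m t j))"

definition exp_reward ::
  "nat \<Rightarrow> real \<Rightarrow> nat \<Rightarrow> (nat \<Rightarrow> real) \<Rightarrow> (nat \<Rightarrow> real) \<Rightarrow> nat \<Rightarrow> real" where
  "exp_reward K eta D v m t =
     (\<Sum>k=0..K. hedge_prob K eta D v m t k * reward (grid K k) (v t) (m t))"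

definition dyn_regret ::
  "nat \<Rightarrow> real \<Rightarrow> nat \<Rightarrow> nat \<Rightarrow> (nat \<Rightarrow> real) \<Rightarrow> (nat \<Rightarrow> real) \<Rightarrow> real" where
  "dyn_regret K eta D T v m =
     (\<Sum>t=1..T. max (v t - m t) 0) - (\<Sum>t=1..T. exp_reward K eta D v m t)"

end

theory Submission
  imports Defs
begin


lemma exp_quad_bound:
  fixes x :: real assumes "\<bar>x\<bar> \<le> 1"
  shows "exp x \<le> 1 + x + x^2"
proof (cases "0 \<le> x")
  case True then show ?thesis using exp_bound[of x] assms by auto
next
  case False
  define y where "y = - x"
  have y: "0 \<le> y" "y \<le> 1" using False assms by (auto simp: y_def)
  have "(1 + y / of_nat 2) ^ 2 \<le> exp y"
    by (rule exp_ge_one_plus_x_over_n_power_n) (use y in auto)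
  then have e: "1 + y + y^2/4 \<le> exp y" by (simp add: power2_eq_square field_simps)
  have pos: "0 < 1 + y + y^2/4" using y by (simp add: add_pos_nonneg)
  have "(1 - y + y^2) * (1 + y + y^2/4) \<ge> 1"
  proof -
    have "(1 - y + y^2) * (1 + y + y^2/4) = 1 + y^2/4 + 3*y^3/4 + y^4/4"
      by (simp add: field_simps power2_eq_square power3_eq_cube power4_eq_xxxx)
    also have "\<dots> \<ge> 1" using y by simp
    finally show ?thesis .
  qed
  then have "1 / (1 + y + y^2/4) \<le> 1 - y + y^2"
    using pos by (simp add: divide_simps)
  moreover have "exp x = 1 / exp y" by (simp add: y_def exp_minus field_simps)
  moreover have "1 / exp y \<le> 1 / (1 + y + y^2/4)"
    using e pos by (intro divide_left_mono) auto
  ultimately show ?thesis by (simp add: y_def)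
qed

lemma hedge_step:
  fixes e g :: "nat \<Rightarrow> real"
  assumes eta: "0 < eta" "eta \<le> 1" and bnd: "\<forall>k\<le>K. \<bar>g k\<bar> \<le> 1"
    and epos: "\<forall>k\<le>K. 0 < e k"
  shows "(\<Sum>j=0..K. e j * exp (eta * g j)) \<le>
    (\<Sum>j=0..K. e j) * exp (eta * (\<Sum>k=0..K. e k / (\<Sum>j=0..K. e j) * g k) + eta^2)"
proof -
  define Z where "Z = (\<Sum>j=0..K. e j)"
  have Zpos: "0 < Z" unfolding Z_def using epos by (intro sum_pos) auto
  have "(\<Sum>j=0..K. e j * exp (eta * g j)) \<le> (\<Sum>j=0..K. e j * (1 + eta * g j + eta^2))"
  proof (intro sum_mono)
    fix j assume j: "j \<in> {0..K}"
    have gj: "\<bar>g j\<bar> \<le> 1" using bnd j by auto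
    have "\<bar>eta * g j\<bar> \<le> 1" using gj eta by (simp add: abs_mult mult_le_one)
    then have "exp (eta * g j) \<le> 1 + eta * g j + (eta * g j)^2" by (rule exp_quad_bound)
    also have "(eta * g j)^2 \<le> eta^2"
    proof -
      have "(g j)^2 \<le> 1" using gj by (metis abs_ge_zero power2_abs power_le_one)
      then show ?thesis using eta by (simp add: power_mult_distrib mult_left_le)
    qed
    finally show "e j * exp (eta * g j) \<le> e j * (1 + eta * g j + eta^2)"
      using epos j by (intro mult_left_mono) auto
  qed
  also have "\<dots> = Z + eta * (\<Sum>j=0..K. e j * g j) + eta^2 * Z"
    unfolding Z_def by (simp add: algebra_simps sum.distrib sum_distrib_left sum_distrib_right)
  also have "\<dots> = Z * (1 + (eta * (\<Sum>k=0..K. e k / Z * g k) + eta^2))"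
  proof -
    have "(\<Sum>k=0..K. e k / Z * g k) = (\<Sum>j=0..K. e j * g j) / Z"
      by (simp add: sum_divide_distrib)
    then show ?thesis using Zpos by (simp add: field_simps)
  qed
  also have "\<dots> \<le> Z * exp (eta * (\<Sum>k=0..K. e k / Z * g k) + eta^2)"
    using Zpos by (intro mult_left_mono) auto
  finally show ?thesis unfolding Z_def .
qed

lemma hedge:
  fixes g :: "nat \<Rightarrow> nat \<Rightarrow> real"
  assumes eta: "0 < eta" "eta \<le> 1" and k0: "k0 \<le> K"
    and bnd: "\<forall>t\<in>{a..<a+L}. \<forall>k\<le>K. \<bar>g t k\<bar> \<le> 1"
  shows "(\<Sum>t\<in>{a..<a+L}. g t k0) - (\<Sum>t\<in>{a..<a+L}. \<Sum>k=0..K.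
      exp (eta * (\<Sum>s\<in>{a..<t}. g s k)) / (\<Sum>j=0..K. exp (eta * (\<Sum>s\<in>{a..<t}. g s j))) * g t k)
    \<le> ln (real K + 1) / eta + eta * real L"
proof -
  define G where "G t k = (\<Sum>s\<in>{a..<t}. g s k)" for t k
  define Z where "Z t = (\<Sum>j=0..K. exp (eta * G t j))" for t
  define P where "P t = (\<Sum>k=0..K. exp (eta * G t k) / Z t * g t k)" for t
  have Z_ind: "Z (a + L') \<le> (real K + 1) * exp (eta * (\<Sum>t\<in>{a..<a+L'}. P t) + eta^2 * L')"
    if "L' \<le> L" for L'
    using that
  proof (induction L')
    case 0
    then show ?case by (simp add: Z_def G_def)
  next
    case (Suc L')
    have GS: "G (Suc (a + L')) j = G (a + L') j + g (a + L') j" for j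
      unfolding G_def by simp
    have "Z (a + Suc L') = (\<Sum>j=0..K. exp (eta * G (a + L') j) * exp (eta * g (a + L') j))"
      unfolding Z_def by (simp add: GS distrib_left exp_add)
    also have "\<dots> \<le> Z (a + L') * exp (eta * P (a + L') + eta^2)"
      unfolding Z_def P_def
      by (rule hedge_step) (use eta bnd Suc.prems in auto)
    also have "\<dots> \<le> (real K + 1) * exp (eta * (\<Sum>t\<in>{a..<a+L'}. P t) + eta^2 * L')
                     * exp (eta * P (a + L') + eta^2)"
      using Suc by (intro mult_right_mono) auto
    also have "\<dots> = (real K + 1) * exp (eta * (\<Sum>t\<in>{a..<a+Suc L'}. P t) + eta^2 * Suc L')"
      by (simp add: mult.assoc exp_add[symmetric] algebra_simps)
    finally show ?case .
  qed
  have "exp (eta * G (a + L) k0) \<le> Z (a + L)"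
    unfolding Z_def using k0 by (intro member_le_sum) auto
  also have "\<dots> \<le> (real K + 1) * exp (eta * (\<Sum>t\<in>{a..<a+L}. P t) + eta^2 * L)"
    by (rule Z_ind) simp
  finally have "eta * G (a + L) k0 \<le> ln (real K + 1) + (eta * (\<Sum>t\<in>{a..<a+L}. P t) + eta^2 * L)"
    by (subst (asm) ln_le_cancel_iff[symmetric]) (auto simp: ln_mult)
  then have "eta * (G (a + L) k0 - (\<Sum>t\<in>{a..<a+L}. P t)) \<le> eta * (ln (real K + 1) / eta + eta * L)"
    using eta by (simp add: algebra_simps power2_eq_square)
  then have "G (a + L) k0 - (\<Sum>t\<in>{a..<a+L}. P t) \<le> ln (real K + 1) / eta + eta * L"
    using eta by (simp add: mult_le_cancel_left_pos)
  then show ?thesis unfolding G_def P_def Z_def by simp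
qed



lemma tele:
  fixes f :: "nat \<Rightarrow> real"
  assumes "s \<le> t"
  shows "\<bar>f t - f s\<bar> \<le> (\<Sum>u\<in>{s<..t}. \<bar>f u - f (u - 1)\<bar>)"
  using assms
proof (induction t rule: dec_induct)
  case base then show ?case by simp
next
  case (step t)
  have "{s<..Suc t} = insert (Suc t) {s<..t}" using step.hyps by auto
  then have "(\<Sum>u\<in>{s<..Suc t}. \<bar>f u - f (u - 1)\<bar>) = \<bar>f (Suc t) - f t\<bar> + (\<Sum>u\<in>{s<..t}. \<bar>f u - f (u - 1)\<bar>)"
    by simp
  then show ?case using step.IH by linarith
qed

lemma comparator:
  fixes v m :: "nat \<Rightarrow> real"
  assumes K: "K \<ge> 1" and vals: "\<forall>t\<in>B. v t \<in> {0..1} \<and> m t \<in> {0..1}"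
    and var: "\<forall>s\<in>B. \<forall>t\<in>B. \<bar>m t - m s\<bar> \<le> Wb \<and> \<bar>v t - v s\<bar> \<le> Wb"
  shows "\<exists>k\<le>K. \<forall>t\<in>B. max (v t - m t) 0 - reward (grid K k) (v t) (m t) \<le> 2*Wb + 1/K"
proof (cases "\<exists>s\<in>B. v s < m s")
  case True
  then obtain s where s: "s \<in> B" "v s < m s" by auto
  show ?thesis
  proof (intro exI[of _ 0] conjI ballI)
    fix t assume t: "t \<in> B"
    have "v t - m t \<le> v s - m s + 2 * Wb" using var s t by fastforce
    moreover have "0 \<le> reward (grid K 0) (v t) (m t)"
      using vals t by (auto simp: reward_def grid_def)
    moreover have "0 \<le> Wb" using var s by fastforce
    moreover have "0 \<le> 1 / real K" by simp
    ultimately show "max (v t - m t) 0 - reward (grid K 0) (v t) (m t) \<le> 2*Wb + 1/K"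
      using s by linarith
  qed simp
next
  case False
  show ?thesis
  proof (cases "B = {}")
    case True then show ?thesis by auto
  next
    case Bne: False
    then obtain a where a: "a \<in> B" by auto
    define M where "M = min 1 (m a + Wb)"
    define k where "k = nat \<lceil>real K * M\<rceil>"
    have Kpos: "real K > 0" using K by simp
    have M0: "0 \<le> M" using vals var a by (fastforce simp: M_def)
    have cpos: "0 \<le> \<lceil>real K * M\<rceil>" using M0 Kpos by (simp add: order.strict_trans2[of "-1" 0])
    have kK: "k \<le> K"
    proof -
      have "real K * M \<le> real K" using Kpos by (simp add: M_def)
      then have "\<lceil>real K * M\<rceil> \<le> int K" by (simp add: ceiling_le_iff)
      from nat_mono[OF this] show ?thesis unfolding k_def by simp
    qed
    have gk: "grid K k = of_int \<lceil>real K * M\<rceil> / real K"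
      unfolding grid_def k_def using cpos by simp
    have g1: "M \<le> grid K k"
      unfolding gk using Kpos by (simp add: field_simps ceiling_correct)
    have g2: "grid K k \<le> M + 1 / real K"
    proof -
      have "of_int \<lceil>real K * M\<rceil> \<le> real K * M + 1" by linarith
      then show ?thesis unfolding gk using Kpos by (simp add: field_simps)
    qed
    show ?thesis
    proof (intro exI[of _ k] conjI ballI kK)
      fix t assume t: "t \<in> B"
      have mt: "m t \<le> M" using var vals a t by (fastforce simp: M_def)
      have vm: "m t \<le> v t" using False t by auto
      have "m t \<le> grid K k" using mt g1 by linarith
      then have r: "reward (grid K k) (v t) (m t) = v t - grid K k" by (simp add: reward_def)
      have "m a - m t \<le> Wb" using var a t by fastforce
      then show "max (v t - m t) 0 - reward (grid K k) (v t) (m t) \<le> 2*Wb + 1/K"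
        using r vm g2 by (simp add: M_def)
    qed
  qed
qed



lemma reward_le_max: "reward b v m \<le> max (v - m) 0"
  by (auto simp: reward_def)

lemma batch_interval:
  fixes T D j :: nat
  assumes D: "1 \<le> D"
  shows "{t\<in>{1..T}. (t - 1) div D = j} = {j*D+1..<j*D+1+min D (T - j*D)}"
proof (intro equalityI subsetI)
  fix t assume "t \<in> {t\<in>{1..T}. (t - 1) div D = j}"
  then have t: "t \<in> {1..T}" "(t - 1) div D = j" by auto
  have "j * D \<le> t - 1" using t(2) using div_times_less_eq_dividend[of "t - 1" D] by simp
  moreover have "t - 1 < j * D + D" using t(2) D
    by (metis add.commute dividend_less_div_times less_add_same_cancel1 less_eq_iff_succ_less)
  ultimately show "t \<in> {j*D+1..<j*D+1+min D (T - j*D)}" using t(1) by auto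
next
  fix t assume t: "t \<in> {j*D+1..<j*D+1+min D (T - j*D)}"
  then have "t \<in> {1..T}" by auto
  moreover have "j * D \<le> t - 1" "t - 1 < Suc j * D" using t by auto
  then have "(t - 1) div D = j"
    by (simp add: div_nat_eqI mult.commute)
  ultimately show "t \<in> {t\<in>{1..T}. (t - 1) div D = j}" by auto
qed



lemma exp_reward_le:
  assumes "\<forall>k\<le>K. True"
  shows "exp_reward K eta D v m t \<le> max (v t - m t) 0"
proof -
  define Z where "Z = (\<Sum>j=0..K. exp (eta * cum_reward K D v m t j))"
  have Zpos: "0 < Z" unfolding Z_def by (intro sum_pos) auto
  have "exp_reward K eta D v m t \<le> (\<Sum>k=0..K. hedge_prob K eta D v m t k * max (v t - m t) 0)"
    unfolding exp_reward_def
    by (intro sum_mono mult_left_mono reward_le_max) (auto simp: hedge_prob_def intro!: divide_nonneg_nonneg sum_nonneg)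
  also have "\<dots> = (\<Sum>k=0..K. hedge_prob K eta D v m t k) * max (v t - m t) 0"
    by (simp add: sum_distrib_right)
  also have "(\<Sum>k=0..K. hedge_prob K eta D v m t k) = 1"
    unfolding hedge_prob_def using Zpos by (simp add: sum_divide_distrib[symmetric] Z_def)
  finally show ?thesis by simp
qed

lemma dyn_regret_nonneg: "0 \<le> dyn_regret K eta D T v m"
proof -
  have "(\<Sum>t=1..T. exp_reward K eta D v m t) \<le> (\<Sum>t=1..T. max (v t - m t) 0)"
    by (intro sum_mono exp_reward_le) auto
  then show ?thesis unfolding dyn_regret_def by simp
qed



lemma main_bound:
  fixes v m :: "nat \<Rightarrow> real" and T D :: nat
  assumes T: "1 \<le> T" and D: "1 \<le> D"
    and vals: "\<forall>t. 1 \<le> t \<and> t \<le> T \<longrightarrow> v t \<in> {0..1} \<and> m t \<in> {0..1}"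
  shows "dyn_regret T (1 / sqrt (real D)) D T v m \<le>
     2 * real D * (variation m T + variation v T) + 1 + (real T / real D + 1) * sqrt (real D) * (ln (real T + 1) + 1)"
proof -
  define eta where "eta = 1 / sqrt (real D)"
  define e where "e u = (if 2 \<le> u then \<bar>m u - m (u - 1)\<bar> + \<bar>v u - v (u - 1)\<bar> else 0)" for u
  define B where "B j = {t\<in>{1..T}. (t - 1) div D = j}" for j
  define N where "N = T div D + 1"
  define Wb where "Wb j = (\<Sum>u\<in>B j. e u)" for j
  define h where "h t = max (v t - m t) 0 - exp_reward T eta D v m t" for t
  have sD: "1 \<le> sqrt (real D)" using D by simp
  have eta: "0 < eta" "eta \<le> 1" using sD by (auto simp: eta_def)
  have e0: "0 \<le> e u" for u by (simp add: e_def)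
  have Bint: "B j = {j*D+1..<j*D+1+min D (T - j*D)}" for j
    unfolding B_def by (rule batch_interval[OF D])
  have cardB: "card (B j) \<le> D" for j unfolding Bint by simp
  have bs: "batch_start D t = j*D+1" if "t \<in> B j" for t j
    using that by (simp add: B_def batch_start_def)
  have tele_B: "\<bar>f t - f s\<bar> \<le> Wb j"
    if st: "s \<in> B j" "t \<in> B j" "s \<le> t" and fe: "\<forall>u\<ge>2. \<bar>f u - f (u - 1)\<bar> \<le> e u"
    for f :: "nat \<Rightarrow> real" and s t j
  proof -
    have sub: "{s<..t} \<subseteq> B j" using st unfolding Bint by auto
    have s1: "1 \<le> s" using st unfolding Bint by auto
    have "\<bar>f t - f s\<bar> \<le> (\<Sum>u\<in>{s<..t}. \<bar>f u - f (u - 1)\<bar>)" by (rule tele) (use st in auto)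
    also have "\<dots> \<le> (\<Sum>u\<in>{s<..t}. e u)"
      using fe s1 by (intro sum_mono) auto
    also have "\<dots> \<le> Wb j" unfolding Wb_def
      using sub e0 by (intro sum_mono2) (auto simp: Bint)
    finally show ?thesis .
  qed
  have fem: "\<forall>u\<ge>2. \<bar>m u - m (u - 1)\<bar> \<le> e u" by (auto simp: e_def)
  have fev: "\<forall>u\<ge>2. \<bar>v u - v (u - 1)\<bar> \<le> e u" by (auto simp: e_def)
  have var_B: "\<forall>s\<in>B j. \<forall>t\<in>B j. \<bar>m t - m s\<bar> \<le> Wb j \<and> \<bar>v t - v s\<bar> \<le> Wb j" for j
  proof (intro ballI)
    fix s t assume st: "s \<in> B j" "t \<in> B j"
    show "\<bar>m t - m s\<bar> \<le> Wb j \<and> \<bar>v t - v s\<bar> \<le> Wb j"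
    proof (cases "s \<le> t")
      case True then show ?thesis using tele_B[OF st True fem] tele_B[OF st True fev] by simp
    next
      case False then have "t \<le> s" by simp
      then show ?thesis using tele_B[OF st(2,1) _ fem] tele_B[OF st(2,1) _ fev]
        by (simp add: abs_minus_commute)
    qed
  qed
  have valsB: "\<forall>t\<in>B j. v t \<in> {0..1} \<and> m t \<in> {0..1}" for j
    using vals by (auto simp: B_def)
  have per_batch: "(\<Sum>t\<in>B j. h t) \<le> 2 * real D * Wb j + real (card (B j)) / real T
      + sqrt (real D) * (ln (real T + 1) + 1)" for j
  proof -
    obtain k where k: "k \<le> T" and comp: "\<forall>t\<in>B j. max (v t - m t) 0 - reward (grid T k) (v t) (m t) \<le> 2 * Wb j + 1 / real T"
      using comparator[OF T valsB var_B] by blast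
    define g where "g s k = reward (grid T k) (v s) (m s)" for s k
    define a where "a = j*D+1"
    define L where "L = min D (T - j*D)"
    have BaL: "B j = {a..<a+L}" unfolding Bint a_def L_def ..
    have gb: "\<forall>t\<in>{a..<a+L}. \<forall>k\<le>T. \<bar>g t k\<bar> \<le> 1"
    proof (intro ballI allI impI)
      fix t k assume t: "t \<in> {a..<a+L}" and kT: "k \<le> T"
      have "0 \<le> grid T k" "grid T k \<le> 1" using kT by (auto simp: grid_def divide_simps)
      moreover have "v t \<in> {0..1}" "m t \<in> {0..1}" using valsB[of j] t BaL by auto
      ultimately show "\<bar>g t k\<bar> \<le> 1" by (auto simp: g_def reward_def)
    qed
    have H: "(\<Sum>t\<in>{a..<a+L}. g t k) - (\<Sum>t\<in>{a..<a+L}. \<Sum>k=0..T.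
      exp (eta * (\<Sum>s\<in>{a..<t}. g s k)) / (\<Sum>j=0..T. exp (eta * (\<Sum>s\<in>{a..<t}. g s j))) * g t k)
      \<le> ln (real T + 1) / eta + eta * real L"
      by (rule hedge[OF eta k gb])
    have ER: "exp_reward T eta D v m t = (\<Sum>k=0..T.
      exp (eta * (\<Sum>s\<in>{a..<t}. g s k)) / (\<Sum>j=0..T. exp (eta * (\<Sum>s\<in>{a..<t}. g s j))) * g t k)"
      if "t \<in> B j" for t
      using bs[OF that] unfolding exp_reward_def hedge_prob_def cum_reward_def g_def a_def by simp
    have H2: "(\<Sum>t\<in>B j. g t k) - (\<Sum>t\<in>B j. exp_reward T eta D v m t) \<le> ln (real T + 1) / eta + eta * real L"
      using H ER BaL by simp
    have L_le: "real L \<le> real D" by (simp add: L_def)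
    have "ln (real T + 1) / eta + eta * real L \<le> sqrt (real D) * ln (real T + 1) + sqrt (real D)"
    proof -
      have "eta * real L \<le> real D / sqrt (real D)" using L_le sD by (simp add: eta_def divide_right_mono)
      also have "\<dots> = sqrt (real D)" using D by (simp add: real_div_sqrt)
      finally show ?thesis by (simp add: eta_def)
    qed
    with H2 have H3: "(\<Sum>t\<in>B j. g t k) - (\<Sum>t\<in>B j. exp_reward T eta D v m t) \<le> sqrt (real D) * (ln (real T + 1) + 1)"
      by (simp add: algebra_simps)
    have "(\<Sum>t\<in>B j. max (v t - m t) 0 - g t k) \<le> (\<Sum>t\<in>B j. 2 * Wb j + 1 / real T)"
      using comp by (intro sum_mono) (auto simp: g_def)
    also have "\<dots> = real (card (B j)) * (2 * Wb j) + real (card (B j)) / real T" by (simp add: algebra_simps)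
    also have "\<dots> \<le> real D * (2 * Wb j) + real (card (B j)) / real T"
    proof -
      have "0 \<le> Wb j" unfolding Wb_def using e0 by (simp add: sum_nonneg)
      then show ?thesis using cardB[of j] by (intro add_right_mono mult_right_mono) auto
    qed
    finally have C: "(\<Sum>t\<in>B j. max (v t - m t) 0 - g t k) \<le> real D * (2 * Wb j) + real (card (B j)) / real T" .
    have "(\<Sum>t\<in>B j. h t) = (\<Sum>t\<in>B j. max (v t - m t) 0 - g t k) + ((\<Sum>t\<in>B j. g t k) - (\<Sum>t\<in>B j. exp_reward T eta D v m t))"
      unfolding h_def by (simp add: sum_subtractf)
    then show ?thesis using C H3 by simp
  qed
  have img: "(\<lambda>t. (t - 1) div D) ` {1..T} \<subseteq> {..<N}"
  proof
    fix x assume "x \<in> (\<lambda>t. (t - 1) div D) ` {1..T}"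
    then obtain t where "t \<in> {1..T}" "x = (t - 1) div D" by auto
    then have "x \<le> T div D" using div_le_mono[of "t - 1" T D] by auto
    then show "x \<in> {..<N}" by (simp add: N_def)
  qed
  have grp: "(\<Sum>j<N. \<Sum>t\<in>B j. f t) = (\<Sum>t=1..T. f t)" for f :: "nat \<Rightarrow> real"
    unfolding B_def by (rule sum.group[OF _ _ img]) auto
  have "dyn_regret T eta D T v m = (\<Sum>t=1..T. h t)"
    unfolding dyn_regret_def h_def by (simp add: sum_subtractf)
  also have "\<dots> = (\<Sum>j<N. \<Sum>t\<in>B j. h t)" by (rule grp[symmetric])
  also have "\<dots> \<le> (\<Sum>j<N. 2 * real D * Wb j + real (card (B j)) / real T
      + sqrt (real D) * (ln (real T + 1) + 1))"
    by (intro sum_mono per_batch)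
  also have "\<dots> = 2 * real D * (\<Sum>j<N. Wb j) + (\<Sum>j<N. real (card (B j))) / real T
      + real N * (sqrt (real D) * (ln (real T + 1) + 1))"
    by (simp add: sum.distrib sum_distrib_left sum_divide_distrib)
  also have "(\<Sum>j<N. Wb j) = variation m T + variation v T"
  proof -
    have "(\<Sum>j<N. Wb j) = (\<Sum>t=1..T. e t)" unfolding Wb_def by (rule grp)
    also have "\<dots> = (\<Sum>t=2..T. e t)"
    proof -
      have "{1..T} = insert 1 {2..T}" using T by auto
      then show ?thesis by (simp add: e_def)
    qed
    also have "\<dots> = variation m T + variation v T"
      unfolding variation_def e_def by (simp add: sum.distrib)
    finally show ?thesis .
  qed
  also have "(\<Sum>j<N. real (card (B j))) = real T"
    using grp[of "\<lambda>_. 1"] by simp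
  also have "real N * (sqrt (real D) * (ln (real T + 1) + 1)) \<le> (real T / real D + 1) * sqrt (real D) * (ln (real T + 1) + 1)"
  proof -
    have "real N \<le> real T / real D + 1" unfolding N_def using of_nat_div_le_of_nat[of T D, where ?'a=real] by simp
    moreover have "0 \<le> sqrt (real D) * (ln (real T + 1) + 1)" by simp
    ultimately show ?thesis by (metis mult.assoc mult_right_mono)
  qed
  finally show ?thesis using T by (simp add: eta_def)
qed



lemma final_arith:
  fixes T W Dr Vs c1 c2 R :: real
  assumes T: "3 \<le> T" and W: "1 \<le> W" and c1: "0 < c1" and c2: "0 < c2" and D1: "1 \<le> Dr"
    and Dup: "Dr \<le> c2 * (T / W) powr (2/3)" and Dlo: "c1 * (T / W) powr (2/3) \<le> Dr"
    and Vs: "Vs \<le> W"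
    and R: "R \<le> 2 * Dr * Vs + 1 + (T / Dr + 1) * sqrt Dr * (ln (T + 1) + 1)"
  shows "R \<le> ((2*c2 + 1) + 3*(1/sqrt c1 + sqrt c2)) * (T powr (2/3) * W powr (1/3) * ln T powr 1)"
proof -
  define a where "a = T powr (1/3)"
  define b where "b = W powr (1/3)"
  have Tp: "0 < T" and Wp: "0 < W" using T W by auto
  have a1: "1 \<le> a" unfolding a_def using T by (intro ge_one_powr_ge_zero) auto
  have b1: "1 \<le> b" unfolding b_def using W by (intro ge_one_powr_ge_zero) auto
  have hT: "T = a^3"
  proof -
    have "a^3 = a powr (real 3)" using a1 by (simp add: powr_realpow)
    also have "\<dots> = T" unfolding a_def using Tp by (simp add: powr_powr)
    finally show ?thesis by simp
  qed
  have hW: "W = b^3"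
  proof -
    have "b^3 = b powr (real 3)" using b1 by (simp add: powr_realpow)
    also have "\<dots> = W" unfolding b_def using Wp by (simp add: powr_powr)
    finally show ?thesis by simp
  qed
  have hT2: "T powr (2/3) = a^2"
  proof -
    have "a^2 = a powr (real 2)" using a1 by (simp add: powr_realpow)
    also have "\<dots> = T powr (2/3)" unfolding a_def using Tp by (simp add: powr_powr)
    finally show ?thesis by simp
  qed
  have hW2: "W powr (2/3) = b^2"
  proof -
    have "b^2 = b powr (real 2)" using b1 by (simp add: powr_realpow)
    also have "\<dots> = W powr (2/3)" unfolding b_def using Wp by (simp add: powr_powr)
    finally show ?thesis by simp
  qed
  have hg: "(T / W) powr (2/3) = a^2 / b^2"
    using Tp Wp hT2 hW2 by (simp add: powr_divide)
  have lnT1: "1 \<le> ln T"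
  proof -
    have "exp 1 \<le> T" using exp_le T by linarith
    then show ?thesis using Tp by (simp add: ln_ge_iff)
  qed
  have lnT: "ln T powr 1 = ln T" using lnT1 by simp
  have lnT2: "ln (T + 1) + 1 \<le> 3 * ln T"
  proof -
    have "3 * T \<le> T * T" using T Tp by (intro mult_right_mono) auto
    then have "T + 1 \<le> T^2" using T unfolding power2_eq_square by linarith
    then have "ln (T + 1) \<le> ln (T^2)" using Tp by simp
    also have "\<dots> = 2 * ln T" using Tp by (simp add: ln_realpow)
    finally show ?thesis using lnT1 by linarith
  qed
  define P where "P = a^2 * b"
  have P1: "1 \<le> P" unfolding P_def using a1 b1 using mult_mono[OF one_le_power[OF a1, of 2] b1] by simp
  have t1: "2 * Dr * Vs \<le> 2 * c2 * P"
  proof -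
    have "Dr * Vs \<le> Dr * W" using Vs D1 by simp
    also have "\<dots> \<le> c2 * (a^2/b^2) * W" using Dup hg Wp by (intro mult_right_mono) auto
    also have "\<dots> = c2 * P" unfolding P_def hW using b1 by (simp add: power2_eq_square power3_eq_cube field_simps)
    finally show ?thesis by simp
  qed
  have sDlo: "sqrt c1 * (a / b) \<le> sqrt Dr"
  proof -
    have "sqrt (c1 * (a/b)^2) \<le> sqrt Dr" using Dlo hg by (simp add: power_divide)
    then show ?thesis using a1 b1 c1 by (simp add: real_sqrt_mult)
  qed
  have sDup: "sqrt Dr \<le> sqrt c2 * P"
  proof -
    have "sqrt Dr \<le> sqrt (c2 * (a/b)^2)" using Dup hg by (simp add: power_divide)
    also have "\<dots> = sqrt c2 * (a / b)" using a1 b1 c2 by (simp add: real_sqrt_mult)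
    also have "\<dots> \<le> sqrt c2 * P"
    proof -
      have "a / b \<le> a" using a1 b1 by (simp add: divide_le_eq)
      also have "a \<le> P" unfolding P_def using a1 b1
        by (metis mult_le_cancel_left1 power2_eq_square dual_order.trans le_numeral_extra(1) linorder_not_le mult.commute order_less_le_trans zero_less_one)
      finally show ?thesis using mult_left_mono[of "a/b" P "sqrt c2"] c2 by simp
    qed
    finally show ?thesis .
  qed
  have sT: "T / sqrt Dr \<le> P / sqrt c1"
  proof -
    have pos: "0 < sqrt c1 * (a / b)" using a1 b1 c1 by simp
    have "T / sqrt Dr \<le> T / (sqrt c1 * (a / b))"
    proof (rule divide_left_mono)
      show "0 < sqrt Dr * (sqrt c1 * (a / b))" by (rule mult_pos_pos[OF _ pos]) (use D1 in simp)
    qed (use sDlo Tp in auto)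
    also have "\<dots> = P / sqrt c1" unfolding P_def hT using a1 b1 c1
      by (simp add: field_simps power2_eq_square power3_eq_cube)
    finally show ?thesis .
  qed
  have t3: "(T / Dr + 1) * sqrt Dr = T / sqrt Dr + sqrt Dr"
    using D1 by (simp add: field_simps)
  have "(T / Dr + 1) * sqrt Dr * (ln (T + 1) + 1) \<le> (P / sqrt c1 + sqrt c2 * P) * (3 * ln T)"
  proof -
    have "0 \<le> ln (T + 1) + 1" using Tp by (smt (verit) ln_ge_zero)
    then have "(T / sqrt Dr + sqrt Dr) * (ln (T + 1) + 1) \<le> (P / sqrt c1 + sqrt c2 * P) * (ln (T + 1) + 1)"
      using sT sDup by (intro mult_right_mono) auto
    also have "\<dots> \<le> (P / sqrt c1 + sqrt c2 * P) * (3 * ln T)"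
      using lnT2 P1 c1 c2 by (intro mult_left_mono) auto
    finally show ?thesis using t3 by simp
  qed
  then have "R \<le> 2 * c2 * P + 1 + (P / sqrt c1 + sqrt c2 * P) * (3 * ln T)"
    using R t1 by linarith
  also have "\<dots> \<le> 2 * c2 * P * ln T + P * ln T + (P / sqrt c1 + sqrt c2 * P) * (3 * ln T)"
  proof -
    have "2 * c2 * P * 1 \<le> 2 * c2 * P * ln T" using lnT1 P1 c2 by (intro mult_left_mono) auto
    then have "2 * c2 * P \<le> 2 * c2 * P * ln T" by simp
    moreover have "1 \<le> P * ln T" using lnT1 P1 using mult_mono[OF P1 lnT1] by simp
    ultimately show ?thesis by linarith
  qed
  also have "\<dots> = ((2*c2 + 1) + 3*(1/sqrt c1 + sqrt c2)) * (T powr (2/3) * W powr (1/3) * ln T powr 1)"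
    unfolding lnT hT2 P_def b_def[symmetric] by (simp add: field_simps)
  finally show ?thesis .
qed


theorem proposition3:
  shows "\<exists>(K :: nat \<Rightarrow> nat \<Rightarrow> nat) (eta :: nat \<Rightarrow> nat \<Rightarrow> real) (c :: real).
    \<forall>(V :: nat \<Rightarrow> real) (v :: nat \<Rightarrow> nat \<Rightarrow> real) (m :: nat \<Rightarrow> nat \<Rightarrow> real) (D :: nat \<Rightarrow> nat).
      (\<forall>T t. 1 \<le> t \<and> t \<le> T \<longrightarrow> v T t \<in> {0..1} \<and> m T t \<in> {0..1}) \<and>
      (\<forall>T. variation (m T) T \<le> V T) \<and>
      V \<in> o(\<lambda>T. real T) \<and>
      (\<lambda>T. variation (v T) T) \<in> o(\<lambda>T. real T) \<and>
      eventually (\<lambda>T. 1 \<le> V T + variation (v T) T) at_top \<and>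
      (\<lambda>T. real (D T)) \<in> \<Theta>(\<lambda>T. (real T / (V T + variation (v T) T)) powr (2/3))
      \<longrightarrow>
      (\<lambda>T. dyn_regret (K T (D T)) (eta T (D T)) (D T) T (v T) (m T))
        \<in> O(\<lambda>T. real T powr (2/3) * (V T + variation (v T) T) powr (1/3) * ln (real T) powr c)"
proof (intro exI[of _ "\<lambda>T D. T"] exI[of _ "\<lambda>T D. 1 / sqrt (real D)"] exI[of _ "1::real"] allI impI)
  fix V :: "nat \<Rightarrow> real" and v m :: "nat \<Rightarrow> nat \<Rightarrow> real" and D :: "nat \<Rightarrow> nat"
  assume A: "(\<forall>T t. 1 \<le> t \<and> t \<le> T \<longrightarrow> v T t \<in> {0..1} \<and> m T t \<in> {0..1}) \<and>
      (\<forall>T. variation (m T) T \<le> V T) \<and>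
      V \<in> o(\<lambda>T. real T) \<and>
      (\<lambda>T. variation (v T) T) \<in> o(\<lambda>T. real T) \<and>
      eventually (\<lambda>T. 1 \<le> V T + variation (v T) T) at_top \<and>
      (\<lambda>T. real (D T)) \<in> \<Theta>(\<lambda>T. (real T / (V T + variation (v T) T)) powr (2/3))"
  then have vals: "\<forall>T t. 1 \<le> t \<and> t \<le> T \<longrightarrow> v T t \<in> {0..1} \<and> m T t \<in> {0..1}"
    and varm: "\<forall>T. variation (m T) T \<le> V T"
    and W1: "eventually (\<lambda>T. 1 \<le> V T + variation (v T) T) at_top"
    and th: "(\<lambda>T. real (D T)) \<in> \<Theta>(\<lambda>T. (real T / (V T + variation (v T) T)) powr (2/3))"
    by auto
  obtain c2 where c2: "c2 > 0" and ev2: "eventually (\<lambda>T. norm (real (D T)) \<le> c2 * norm ((real T / (V T + variation (v T) T)) powr (2/3))) at_top"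
    using landau_o.bigE[OF bigthetaD1[OF th]] by blast
  obtain c1 where c1: "c1 > 0" and ev1: "eventually (\<lambda>T. norm (real (D T)) \<ge> c1 * norm ((real T / (V T + variation (v T) T)) powr (2/3))) at_top"
    using landau_omega.bigE[OF bigthetaD2[OF th]] by blast
  define C where "C = (2*c2 + 1) + 3*(1/sqrt c1 + sqrt c2)"
  have Cpos: "C > 0" unfolding C_def using c1 c2 by (simp add: add_pos_nonneg)
  show "(\<lambda>T. dyn_regret ((\<lambda>T D. T) T (D T)) ((\<lambda>T D. 1 / sqrt (real D)) T (D T)) (D T) T (v T) (m T))
        \<in> O(\<lambda>T. real T powr (2/3) * (V T + variation (v T) T) powr (1/3) * ln (real T) powr 1)"
  proof (rule landau_o.bigI[OF Cpos])
    show "\<forall>\<^sub>F T in at_top. norm (dyn_regret ((\<lambda>T D. T) T (D T)) ((\<lambda>T D. 1 / sqrt (real D)) T (D T)) (D T) T (v T) (m T))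
        \<le> C * norm (real T powr (2/3) * (V T + variation (v T) T) powr (1/3) * ln (real T) powr 1)"
      using ev1 ev2 W1 eventually_ge_at_top[of "3::nat"]
    proof eventually_elim
      case (elim T)
      define W where "W = V T + variation (v T) T"
      define gg where "gg = (real T / W) powr (2/3)"
      have W1': "1 \<le> W" using elim W_def by simp
      have T3: "3 \<le> real T" using elim by simp
      have ggpos: "0 < gg" unfolding gg_def using W1' T3 by simp
      have lo: "c1 * gg \<le> real (D T)" using elim(1) ggpos by (simp add: gg_def W_def)
      have up: "real (D T) \<le> c2 * gg" using elim(2) ggpos by (simp add: gg_def W_def)
      have D1: "1 \<le> D T"
      proof -
        have "0 < real (D T)" using lo c1 ggpos by (smt (verit) mult_pos_pos)
        then show ?thesis by simp
      qed
      have valsT: "\<forall>t. 1 \<le> t \<and> t \<le> T \<longrightarrow> v T t \<in> {0..1} \<and> m T t \<in> {0..1}" using vals by blast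
      have MB: "dyn_regret T (1 / sqrt (real (D T))) (D T) T (v T) (m T) \<le>
         2 * real (D T) * (variation (m T) T + variation (v T) T) + 1 + (real T / real (D T) + 1) * sqrt (real (D T)) * (ln (real T + 1) + 1)"
        by (rule main_bound) (use T3 D1 valsT in auto)
      have Vs: "variation (m T) T + variation (v T) T \<le> W" using varm W_def by simp
      have FA: "dyn_regret T (1 / sqrt (real (D T))) (D T) T (v T) (m T) \<le> C * (real T powr (2/3) * W powr (1/3) * ln (real T) powr 1)"
        unfolding C_def
        by (rule final_arith[OF T3 W1' c1 c2 _ _ _ Vs MB]) (use D1 up lo in \<open>auto simp: gg_def\<close>)
      have nn: "0 \<le> dyn_regret T (1 / sqrt (real (D T))) (D T) T (v T) (m T)" by (rule dyn_regret_nonneg)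
      have nn2: "0 \<le> real T powr (2/3) * W powr (1/3) * ln (real T) powr 1" by simp
      show ?case using FA nn nn2 by (simp add: W_def)
    qed
  qed
qed

end
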